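(* Let $k \geq 2$ be an integer and let $G$ be a $k$-connected $(K_2 \cup kK_1)$-free graph. Then $\alpha(G) \leq \frac{|V(G)|}{2}$ if and only if $G$ is $1$-tough. Moreover, if $G$ is $(k+1)$-connected and $(K_2 \cup kK_1)$-free, then $\alpha(G) < \frac{|V(G)|}{2}$ if and only if $t(G) > 1$.
   Context: All graphs are finite, undirected and simple. $\alpha(G)$ denotes the independence number and $\omega(H)$ the number of components of a graph $H$. For graphs $R, R'$, $R \cup R'$ is their disjoint union and $kR$ is the disjoint union of $k$ copies of $R$; $K_n$ is the complete graph on $n$ vertices. A graph $G$ is $R$-free if it contains no induced subgraph isomorphic to $R$. The toughness $t(G)$ is $\min\{|S|/\omega(G-S) : S \subset V(G),\ \omega(G-S) \geq 2\}$, or $t(G)=\infty$ if $G$ is complete; $G$ is $1$-tough if $t(G) \geq 1$. *)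

theory Defs
  imports Complex_Main "HOL-Library.Extended_Real"
begin

definition simple_graph :: "'a set \<Rightarrow> ('a \<Rightarrow> 'a \<Rightarrow> bool) \<Rightarrow> bool" where
  "simple_graph V E \<longleftrightarrow> finite V \<and> (\<forall>x y. E x y \<longrightarrow> x \<in> V \<and> y \<in> V)
     \<and> (\<forall>x y. E x y \<longrightarrow> E y x) \<and> (\<forall>x. \<not> E x x)"

definition independent_set :: "'a set \<Rightarrow> ('a \<Rightarrow> 'a \<Rightarrow> bool) \<Rightarrow> 'a set \<Rightarrow> bool" where
  "independent_set V E S \<longleftrightarrow> S \<subseteq> V \<and> (\<forall>x\<in>S. \<forall>y\<in>S. \<not> E x y)"

definition indep_number :: "'a set \<Rightarrow> ('a \<Rightarrow> 'a \<Rightarrow> bool) \<Rightarrow> nat" where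
  "indep_number V E = Max (card ` {S. independent_set V E S})"

definition conn_rel :: "'a set \<Rightarrow> ('a \<Rightarrow> 'a \<Rightarrow> bool) \<Rightarrow> ('a \<times> 'a) set" where
  "conn_rel A E = {(x, y). x \<in> A \<and> y \<in> A \<and> (x, y) \<in> ({(a, b). a \<in> A \<and> b \<in> A \<and> E a b})\<^sup>*}"

definition num_components :: "'a set \<Rightarrow> ('a \<Rightarrow> 'a \<Rightarrow> bool) \<Rightarrow> nat" where
  "num_components A E = card (A // conn_rel A E)"

definition complete_graph :: "'a set \<Rightarrow> ('a \<Rightarrow> 'a \<Rightarrow> bool) \<Rightarrow> bool" where
  "complete_graph V E \<longleftrightarrow> (\<forall>x\<in>V. \<forall>y\<in>V. x \<noteq> y \<longrightarrow> E x y)"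

definition k_connected :: "nat \<Rightarrow> 'a set \<Rightarrow> ('a \<Rightarrow> 'a \<Rightarrow> bool) \<Rightarrow> bool" where
  "k_connected k V E \<longleftrightarrow> card V > k \<and>
     (\<forall>S. S \<subseteq> V \<and> card S < k \<longrightarrow> num_components (V - S) E = 1)"

definition toughness :: "'a set \<Rightarrow> ('a \<Rightarrow> 'a \<Rightarrow> bool) \<Rightarrow> ereal" where
  "toughness V E = (if complete_graph V E then \<infinity> else
     ereal (Min {real (card S) / real (num_components (V - S) E) | S.
                  S \<subset> V \<and> num_components (V - S) E \<ge> 2}))"

definition K2_kK1_free :: "nat \<Rightarrow> 'a set \<Rightarrow> ('a \<Rightarrow> 'a \<Rightarrow> bool) \<Rightarrow> bool" where
  "K2_kK1_free k V E \<longleftrightarrow> \<not> (\<exists>u v I. u \<in> V \<and> v \<in> V \<and> E u v \<and> I \<subseteq> V \<and> card I = k \<and>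
      u \<notin> I \<and> v \<notin> I \<and> independent_set V E I \<and> (\<forall>w\<in>I. \<not> E u w \<and> \<not> E v w))"

end

theory Submission imports Defs begin

lemma conn_equiv:
  assumes sym: "\<And>x y. E x y \<Longrightarrow> E y x"
  shows "equiv A (conn_rel A E)"
proof (rule equivI)
  let ?R = "{(a, b). a \<in> A \<and> b \<in> A \<and> E a b}"
  have sR: "sym (?R\<^sup>*)" by (rule sym_rtrancl) (auto simp: sym_def intro: sym)
  show "conn_rel A E \<subseteq> A \<times> A" by (auto simp: conn_rel_def)
  show "refl_on A (conn_rel A E)" by (auto simp: conn_rel_def refl_on_def)
  show "sym (conn_rel A E)" using sR by (auto simp: conn_rel_def sym_def)
  show "trans (conn_rel A E)" unfolding conn_rel_def trans_def
    by (auto intro: rtrancl_trans)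
qed

lemma conn_edge:
  "x \<in> A \<Longrightarrow> y \<in> A \<Longrightarrow> E x y \<Longrightarrow> (x, y) \<in> conn_rel A E"
  by (auto simp: conn_rel_def)

lemma nc_indep:
  assumes "\<forall>x\<in>A. \<forall>y\<in>A. \<not> E x y"
  shows "num_components A E = card A"
proof -
  have e: "{(a, b). a \<in> A \<and> b \<in> A \<and> E a b} = {}" using assms by auto
  have R: "conn_rel A E = {(x,y). x \<in> A \<and> y = x}" unfolding conn_rel_def e by auto
  have "A // conn_rel A E = (\<lambda>a. {a}) ` A"
    unfolding R quotient_def by auto
  moreover have "inj_on (\<lambda>a. {a}) A" by (auto simp: inj_on_def)
  ultimately show ?thesis unfolding num_components_def by (simp add: card_image)
qed

lemma key:
  fixes V :: "'a set"
  assumes sg: "simple_graph V E" and free: "K2_kK1_free k V E" and AV: "A \<subseteq> V"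
    and nc: "num_components A E \<ge> k + 1"
  shows "\<forall>x\<in>A. \<forall>y\<in>A. \<not> E x y"
proof (rule ccontr)
  assume "\<not> ?thesis"
  then obtain x y where xA: "x \<in> A" and yA: "y \<in> A" and exy: "E x y" by blast
  have symE: "\<And>a b. E a b \<Longrightarrow> E b a" and irr: "\<And>a. \<not> E a a" and finV: "finite V"
    using sg by (auto simp: simple_graph_def)
  define R where "R = conn_rel A E"
  have eq: "equiv A R" unfolding R_def using conn_equiv symE by blast
  have finA: "finite A" using finV AV finite_subset by blast
  define Q where "Q = A // R"
  have finQ: "finite Q" unfolding Q_def using finite_quotient[OF finA] equiv_type[OF eq] by blast
  define C0 where "C0 = R``{x}"
  have C0Q: "C0 \<in> Q" unfolding C0_def Q_def using xA by (rule quotientI)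
  have xC0: "x \<in> C0" unfolding C0_def using equiv_class_self[OF eq xA] .
  have "card Q \<ge> k + 1" using nc unfolding num_components_def Q_def R_def by simp
  hence "card (Q - {C0}) \<ge> k" using C0Q finQ by simp
  then obtain Q' where Q'sub: "Q' \<subseteq> Q - {C0}" and cQ': "card Q' = k" and finQ': "finite Q'"
    by (rule obtain_subset_with_card_n)
  define f :: "'a set \<Rightarrow> 'a" where "f = (\<lambda>C. SOME a. a \<in> C)"
  have fC: "f C \<in> C" if "C \<in> Q" for C
  proof -
    have "C \<noteq> {}" using in_quotient_imp_non_empty[OF eq] that unfolding Q_def by blast
    thus ?thesis unfolding f_def by (simp add: some_in_eq)
  qed
  have QA: "C \<subseteq> A" if "C \<in> Q" for C
    using in_quotient_imp_subset[OF eq] that unfolding Q_def by blast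
  have disj: "C = D" if "C \<in> Q" "D \<in> Q" "a \<in> C" "a \<in> D" for C D a
  proof -
    have "C = D \<or> C \<inter> D = {}" using quotient_disj[OF eq, of C D] that(1,2) unfolding Q_def by simp
    thus ?thesis using that(3,4) by blast
  qed
  have sep: "C = D" if "C \<in> Q" "D \<in> Q" "a \<in> C" "b \<in> D" "E a b" for C D a b
  proof -
    have aA: "a \<in> A" using QA[OF that(1)] that(3) by blast
    have bA: "b \<in> A" using QA[OF that(2)] that(4) by blast
    have "(a, b) \<in> R" unfolding R_def using aA bA that(5) by (rule conn_edge)
    moreover have "C \<in> A // R" using that(1) unfolding Q_def .
    ultimately have "b \<in> C" using in_quotient_imp_closed[OF eq _ that(3)] by blast
    thus ?thesis using disj[OF that(1,2) _ that(4)] by blast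
  qed
  have yC0: "y \<in> C0"
  proof -
    have xy: "(x, y) \<in> R" unfolding R_def using xA yA exy by (rule conn_edge)
    have "C0 \<in> A // R" using C0Q unfolding Q_def .
    from in_quotient_imp_closed[OF eq this xC0 xy] show ?thesis .
  qed
  define I where "I = f ` Q'"
  have inj: "inj_on f Q'"
  proof (rule inj_onI)
    fix C D assume "C \<in> Q'" "D \<in> Q'" "f C = f D"
    hence CQ: "C \<in> Q" and DQ: "D \<in> Q" using Q'sub by auto
    show "C = D" using disj[OF CQ DQ fC[OF CQ]] fC[OF DQ] \<open>f C = f D\<close> by simp
  qed
  have cI: "card I = k" unfolding I_def using card_image[OF inj] cQ' by simp
  moreover have IV: "I \<subseteq> V"
  proof
    fix w assume "w \<in> I"
    then obtain C where C: "C \<in> Q'" "w = f C" unfolding I_def by blast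
    have CQ: "C \<in> Q" using C Q'sub by blast
    have "C \<subseteq> A" using in_quotient_imp_subset[OF eq] CQ unfolding Q_def by blast
    thus "w \<in> V" using fC[OF CQ] C AV by blast
  qed
  moreover have xyI: "x \<notin> I \<and> y \<notin> I"
  proof
    show "x \<notin> I"
    proof
      assume "x \<in> I"
      then obtain C where C: "C \<in> Q'" "x = f C" unfolding I_def by blast
      have CQ: "C \<in> Q" "C \<noteq> C0" using C Q'sub by blast+
      show False using disj[OF CQ(1) C0Q _ xC0] fC[OF CQ(1)] C CQ by simp
    qed
    show "y \<notin> I"
    proof
      assume "y \<in> I"
      then obtain C where C: "C \<in> Q'" "y = f C" unfolding I_def by blast
      have CQ: "C \<in> Q" "C \<noteq> C0" using C Q'sub by blast+
      show False using disj[OF CQ(1) C0Q _ yC0] fC[OF CQ(1)] C CQ by simp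
    qed
  qed
  moreover have indI: "independent_set V E I"
    unfolding independent_set_def
  proof
    show "I \<subseteq> V" by (rule IV)
    show "\<forall>a\<in>I. \<forall>b\<in>I. \<not> E a b"
    proof (intro ballI notI)
      fix a b assume "a \<in> I" "b \<in> I" "E a b"
      then obtain C D where "C \<in> Q'" "D \<in> Q'" "a = f C" "b = f D" unfolding I_def by blast
      moreover have "C \<in> Q" "D \<in> Q" using calculation Q'sub by blast+
      moreover have "C = D" using sep[of C D a b] fC calculation \<open>E a b\<close> by blast
      ultimately show False using irr \<open>E a b\<close> by simp
    qed
  qed
  moreover have nadj: "\<forall>w\<in>I. \<not> E x w \<and> \<not> E y w"
  proof
    fix w assume "w \<in> I"
    then obtain C where C: "C \<in> Q'" "w = f C" unfolding I_def by blast
    have CQ: "C \<in> Q" "C \<noteq> C0" using C Q'sub by blast+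
    show "\<not> E x w \<and> \<not> E y w"
      using sep[OF C0Q CQ(1) xC0 fC[OF CQ(1)]] sep[OF C0Q CQ(1) yC0 fC[OF CQ(1)]] CQ C by auto
  qed
  moreover have xV: "x \<in> V" and yV: "y \<in> V" using xA yA AV by blast+
  ultimately have "\<exists>u v I. u \<in> V \<and> v \<in> V \<and> E u v \<and> I \<subseteq> V \<and> card I = k \<and>
      u \<notin> I \<and> v \<notin> I \<and> independent_set V E I \<and> (\<forall>w\<in>I. \<not> E u w \<and> \<not> E v w)"
    using exy by (intro exI[of _ x] exI[of _ y] exI[of _ I]) simp
  thus False using free unfolding K2_kK1_free_def by blast
qed

lemma alpha_fin:
  assumes "simple_graph V E"
  shows "finite (card ` {S. independent_set V E S})"
proof -
  have "finite V" using assms by (simp add: simple_graph_def)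
  hence "card ` {S. independent_set V E S} \<subseteq> {..card V}"
    by (auto simp: independent_set_def intro: card_mono)
  thus ?thesis using finite_subset by blast
qed

lemma alpha_ge:
  assumes "simple_graph V E" "independent_set V E S"
  shows "card S \<le> indep_number V E"
  unfolding indep_number_def using alpha_fin[OF assms(1)] assms(2) by (intro Max_ge) auto

lemma alpha_ex:
  assumes "simple_graph V E"
  obtains I where "independent_set V E I" "card I = indep_number V E"
proof -
  have "independent_set V E {}" by (simp add: independent_set_def)
  hence "indep_number V E \<in> card ` {S. independent_set V E S}"
    unfolding indep_number_def using alpha_fin[OF assms] by (intro Max_in) auto
  then obtain I where "independent_set V E I" "indep_number V E = card I" by auto
  thus ?thesis using that by simp
qed

lemma core:
  assumes sg: "simple_graph V E" and free: "K2_kK1_free k V E" and SV: "S \<subseteq> V"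
    and nc: "num_components (V - S) E \<ge> k + 1"
  shows "num_components (V - S) E = card (V - S) \<and> card (V - S) \<le> indep_number V E"
proof -
  have ind: "\<forall>x\<in>V - S. \<forall>y\<in>V - S. \<not> E x y" using key[OF sg free _ nc] by blast
  have "independent_set V E (V - S)" using ind by (auto simp: independent_set_def)
  thus ?thesis using nc_indep[OF ind] alpha_ge[OF sg] by simp
qed

definition TS where "TS V E = {real (card S) / real (num_components (V - S) E) | S.
                  S \<subset> V \<and> num_components (V - S) E \<ge> 2}"

lemma TS_image: "TS V E = (\<lambda>S. real (card S) / real (num_components (V - S) E)) `
       {S. S \<subset> V \<and> num_components (V - S) E \<ge> 2}"
    unfolding TS_def by (rule setcompr_eq_image)

lemma TS_props:
  assumes sg: "simple_graph V E" and nc: "\<not> complete_graph V E"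
  shows "finite (TS V E)" "TS V E \<noteq> {}"
proof -
  have finV: "finite V" using sg by (simp add: simple_graph_def)
  have TSi: "TS V E = (\<lambda>S. real (card S) / real (num_components (V - S) E)) `
       {S. S \<subset> V \<and> num_components (V - S) E \<ge> 2}"
    unfolding TS_def by (rule setcompr_eq_image)
  have "{S. S \<subset> V \<and> num_components (V - S) E \<ge> 2} \<subseteq> Pow V" by auto
  hence "finite {S. S \<subset> V \<and> num_components (V - S) E \<ge> 2}"
    using finV by (meson finite_Pow_iff finite_subset)
  thus "finite (TS V E)" unfolding TSi by (rule finite_imageI)
  obtain x y where xy: "x \<in> V" "y \<in> V" "x \<noteq> y" "\<not> E x y"
    using nc unfolding complete_graph_def by blast
  have symE: "\<And>a b. E a b \<Longrightarrow> E b a" and irr: "\<And>a. \<not> E a a"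
    using sg unfolding simple_graph_def by auto
  have nyx: "\<not> E y x" using xy(4) symE by blast
  define S where "S = V - {x, y}"
  have VS: "V - S = {x, y}" unfolding S_def using xy by auto
  have "\<forall>a\<in>{x,y}. \<forall>b\<in>{x,y}. \<not> E a b" using xy(4) nyx irr by auto
  from nc_indep[OF this] have "num_components (V - S) E = 2" unfolding VS using xy(3) by simp
  moreover have "S \<subset> V" unfolding S_def using xy by auto
  ultimately have "real (card S) / real (num_components (V - S) E) \<in> TS V E"
    unfolding TSi by (intro imageI) simp
  thus "TS V E \<noteq> {}" by blast
qed

lemma tough_ge1:
  assumes sg: "simple_graph V E" and nc: "\<not> complete_graph V E"
  shows "toughness V E \<ge> 1 \<longleftrightarrow> (\<forall>S. S \<subset> V \<and> num_components (V - S) E \<ge> 2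
            \<longrightarrow> num_components (V - S) E \<le> card S)"
proof -
  have t: "toughness V E = ereal (Min (TS V E))" using nc unfolding toughness_def TS_def by simp
  have "toughness V E \<ge> 1 \<longleftrightarrow> (\<forall>t\<in>TS V E. 1 \<le> t)"
    unfolding t using TS_props[OF sg nc] by (simp add: Min_ge_iff)
  also have "\<dots> \<longleftrightarrow> (\<forall>S. S \<subset> V \<and> num_components (V - S) E \<ge> 2
            \<longrightarrow> 1 \<le> real (card S) / real (num_components (V - S) E))"
    unfolding TS_image by simp
  also have "\<dots> \<longleftrightarrow> (\<forall>S. S \<subset> V \<and> num_components (V - S) E \<ge> 2
            \<longrightarrow> num_components (V - S) E \<le> card S)"
  proof -
    have h: "\<And>S. num_components (V - S) E \<ge> 2 \<Longrightarrow> (1 \<le> real (card S) / real (num_components (V - S) E)) \<longleftrightarrow> num_components (V - S) E \<le> card S"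
      by (simp add: le_divide_eq)
    show ?thesis by (simp add: h)
  qed
  finally show ?thesis .
qed

lemma tough_gt1:
  assumes sg: "simple_graph V E" and nc: "\<not> complete_graph V E"
  shows "toughness V E > 1 \<longleftrightarrow> (\<forall>S. S \<subset> V \<and> num_components (V - S) E \<ge> 2
            \<longrightarrow> num_components (V - S) E < card S)"
proof -
  have t: "toughness V E = ereal (Min (TS V E))" using nc unfolding toughness_def TS_def by simp
  have "toughness V E > 1 \<longleftrightarrow> (\<forall>t\<in>TS V E. 1 < t)"
    unfolding t using TS_props[OF sg nc] by (simp add: Min_gr_iff)
  also have "\<dots> \<longleftrightarrow> (\<forall>S. S \<subset> V \<and> num_components (V - S) E \<ge> 2
            \<longrightarrow> 1 < real (card S) / real (num_components (V - S) E))"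
    unfolding TS_image by simp
  also have "\<dots> \<longleftrightarrow> (\<forall>S. S \<subset> V \<and> num_components (V - S) E \<ge> 2
            \<longrightarrow> num_components (V - S) E < card S)"
  proof -
    have h: "\<And>S. num_components (V - S) E \<ge> 2 \<Longrightarrow> (1 < real (card S) / real (num_components (V - S) E)) \<longleftrightarrow> num_components (V - S) E < card S"
      by (simp add: less_divide_eq)
    show ?thesis by (simp add: h)
  qed
  finally show ?thesis .
qed

lemma complete_alpha:
  assumes sg: "simple_graph V E" and c: "complete_graph V E"
  shows "indep_number V E \<le> 1"
proof -
  obtain I where I: "independent_set V E I" "card I = indep_number V E" using alpha_ex[OF sg] by blast
  have finV: "finite V" using sg by (simp add: simple_graph_def)
  have IV: "I \<subseteq> V" using I(1) by (simp add: independent_set_def)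
  hence finI: "finite I" using finV finite_subset by blast
  have "\<forall>x\<in>I. \<forall>y\<in>I. x = y"
  proof (intro ballI)
    fix x y assume "x \<in> I" "y \<in> I"
    thus "x = y" using I(1) c IV unfolding independent_set_def complete_graph_def by blast
  qed
  hence "card I \<le> Suc 0" using card_le_Suc0_iff_eq[OF finI] by blast
  thus ?thesis using I(2) by simp
qed

lemma indep_big:
  assumes sg: "simple_graph V E" and I: "independent_set V E I" and c2: "card I \<ge> 2"
  shows "\<not> complete_graph V E \<and> V - I \<subset> V \<and> V - (V - I) = I
         \<and> num_components (V - (V - I)) E = card I"
proof -
  have finV: "finite V" using sg by (simp add: simple_graph_def)
  have IV: "I \<subseteq> V" using I by (simp add: independent_set_def)
  hence finI: "finite I" using finV finite_subset by blast
  have "\<not> card I \<le> Suc 0" using c2 by simp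
  then obtain x y where xy: "x \<in> I" "y \<in> I" "x \<noteq> y" using card_le_Suc0_iff_eq[OF finI] by blast
  have "\<not> E x y" using I xy unfolding independent_set_def by blast
  hence "\<not> complete_graph V E" using xy IV unfolding complete_graph_def by blast
  moreover have "V - I \<subset> V" using xy IV by blast
  moreover have "V - (V - I) = I" using IV by blast
  moreover have "num_components I E = card I"
    using I unfolding independent_set_def by (intro nc_indep) blast
  ultimately show ?thesis by simp
qed

theorem mainTheorem4:
  fixes V :: "'a set" and E :: "'a \<Rightarrow> 'a \<Rightarrow> bool" and k :: nat
  assumes "k \<ge> 2" and "simple_graph V E" and "K2_kK1_free k V E"
  shows "(k_connected k V E \<longrightarrow>
            (real (indep_number V E) \<le> real (card V) / 2 \<longleftrightarrow> toughness V E \<ge> 1))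
       \<and> (k_connected (k + 1) V E \<longrightarrow>
            (real (indep_number V E) < real (card V) / 2 \<longleftrightarrow> toughness V E > 1))"
proof -
  note k2 = assms(1) and sg = assms(2) and free = assms(3)
  have finV: "finite V" using sg by (simp add: simple_graph_def)
  define a where "a = indep_number V E"
  define n where "n = card V"
  have split: "card V = card S + card (V - S)" if "S \<subseteq> V" for S
    using finV that by (metis card_Diff_subset card_mono finite_subset le_add_diff_inverse)
  show ?thesis
  proof (intro conjI impI)
    assume kc: "k_connected k V E"
    have nk: "card V > k" and conn: "\<And>S. S \<subseteq> V \<Longrightarrow> card S < k \<Longrightarrow> num_components (V - S) E = 1"
      using kc unfolding k_connected_def by auto
    show "real (indep_number V E) \<le> real (card V) / 2 \<longleftrightarrow> toughness V E \<ge> 1"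
    proof
      assume al: "real (indep_number V E) \<le> real (card V) / 2"
      show "toughness V E \<ge> 1"
      proof (cases "complete_graph V E")
        case True thus ?thesis by (simp add: toughness_def)
      next
        case False
        show ?thesis unfolding tough_ge1[OF sg False]
        proof (intro allI impI)
          fix S assume S: "S \<subset> V \<and> 2 \<le> num_components (V - S) E"
          show "num_components (V - S) E \<le> card S"
          proof (rule ccontr)
            assume lt: "\<not> num_components (V - S) E \<le> card S"
            have SV: "S \<subseteq> V" using S by blast
            have "\<not> card S < k" using conn[OF SV] S by auto
            hence "num_components (V - S) E \<ge> k + 1" using lt by linarith
            from core[OF sg free SV this] lt split[OF SV] al show False by linarith
          qed
        qed
      qed
    next
      assume t: "toughness V E \<ge> 1"
      obtain I where I: "independent_set V E I" "card I = indep_number V E" using alpha_ex[OF sg] by blast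
      show "real (indep_number V E) \<le> real (card V) / 2"
      proof (cases "card I \<ge> 2")
        case False thus ?thesis using I(2) nk k2 by linarith
      next
        case True
        note ib = indep_big[OF sg I(1) True]
        have "num_components (V - (V - I)) E \<le> card (V - I)"
          using t ib unfolding tough_ge1[OF sg conjunct1[OF ib]] using True by auto
        moreover have "I \<subseteq> V" using I(1) by (simp add: independent_set_def)
        ultimately show ?thesis using split[of "V - I"] ib I(2) by auto
      qed
    qed
  next
    assume kc: "k_connected (k + 1) V E"
    have nk: "card V > k + 1" and conn: "\<And>S. S \<subseteq> V \<Longrightarrow> card S < k + 1 \<Longrightarrow> num_components (V - S) E = 1"
      using kc unfolding k_connected_def by auto
    show "real (indep_number V E) < real (card V) / 2 \<longleftrightarrow> toughness V E > 1"
    proof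
      assume al: "real (indep_number V E) < real (card V) / 2"
      show "toughness V E > 1"
      proof (cases "complete_graph V E")
        case True thus ?thesis by (simp add: toughness_def)
      next
        case False
        show ?thesis unfolding tough_gt1[OF sg False]
        proof (intro allI impI)
          fix S assume S: "S \<subset> V \<and> 2 \<le> num_components (V - S) E"
          show "num_components (V - S) E < card S"
          proof (rule ccontr)
            assume lt: "\<not> num_components (V - S) E < card S"
            have SV: "S \<subseteq> V" using S by blast
            have "\<not> card S < k + 1" using conn[OF SV] S by auto
            hence "num_components (V - S) E \<ge> k + 1" using lt by linarith
            from core[OF sg free SV this] lt split[OF SV] al show False by linarith
          qed
        qed
      qed
    next
      assume t: "toughness V E > 1"
      obtain I where I: "independent_set V E I" "card I = indep_number V E" using alpha_ex[OF sg] by blast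
      show "real (indep_number V E) < real (card V) / 2"
      proof (cases "card I \<ge> 2")
        case False thus ?thesis using I(2) nk k2 by linarith
      next
        case True
        note ib = indep_big[OF sg I(1) True]
        have "num_components (V - (V - I)) E < card (V - I)"
          using t ib unfolding tough_gt1[OF sg conjunct1[OF ib]] using True by auto
        moreover have "I \<subseteq> V" using I(1) by (simp add: independent_set_def)
        ultimately show ?thesis using split[of "V - I"] ib I(2) by auto
      qed
    qed
  qed
qed

end
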